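(* Let $\Delta:M_n\to M_n$ be a weak-2-local derivation, let $p_1,\ldots,p_n$ be mutually orthogonal minimal projections in $M_n$, and let $q=1-p_n$. Let $R\subseteq\{1,\ldots,n-1\}$ and set $r=\sum_{i\in R}p_i$ if $R\neq\emptyset$ and $r=0$ if $R=\emptyset$. Assume $\Delta(qaq+rap_n)=0$ for every $a\in M_n$. Then $\Delta(qaq+rap_n+\lambda e_{kn})=p_k\Delta(qaq+rap_n+\lambda e_{kn})p_n$ for every $a\in M_n$, $\lambda\in\mathbb{C}$ and $1\le k\le n-1$.
   Context: $M_n=M_n(\mathbb{C})$. For $i,j$, $e_{ij}$ is the unique minimal partial isometry in $M_n$ with $e_{ij}^*e_{ij}=p_j$ and $e_{ij}e_{ij}^*=p_i$. A derivation on $M_n$ is a linear map $D$ with $D(ab)=D(a)b+aD(b)$. A (not necessarily linear) map $\Delta:M_n\to M_n$ is a weak-2-local derivation if for every $a,b\in M_n$ and every $\phi\in M_n^*$ there exists a derivation $D_{a,b,\phi}$ such that $\phi\Delta(a)=\phi D_{a,b,\phi}(a)$ and $\phi\Delta(b)=\phi D_{a,b,\phi}(b)$. *)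

theory Defs
  imports "HOL-Analysis.Analysis"
begin

text \<open>M_n(C) is modelled as complex^'n^'n with CARD('n) = n; the projections
p_1,...,p_n are indexed by the finite type 'n.\<close>

definition cscale :: "complex \<Rightarrow> complex^'n^'n \<Rightarrow> complex^'n^'n" where
  "cscale c A = (\<chi> i j. c * A $ i $ j)"

definition adj :: "complex^'n^'n \<Rightarrow> complex^'n^'n" where
  "adj A = (\<chi> i j. cnj (A $ j $ i))"

definition clinear_functional :: "(complex^'n^'n \<Rightarrow> complex) \<Rightarrow> bool" where
  "clinear_functional \<phi> \<longleftrightarrow>
     (\<forall>A B. \<phi> (A + B) = \<phi> A + \<phi> B) \<and> (\<forall>c A. \<phi> (cscale c A) = c * \<phi> A)"

definition is_derivation :: "(complex^'n^'n \<Rightarrow> complex^'n^'n) \<Rightarrow> bool" where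
  "is_derivation D \<longleftrightarrow>
     (\<forall>A B. D (A + B) = D A + D B) \<and> (\<forall>c A. D (cscale c A) = cscale c (D A)) \<and>
     (\<forall>A B. D (A ** B) = D A ** B + A ** D B)"

definition weak_2_local_derivation :: "(complex^'n^'n \<Rightarrow> complex^'n^'n) \<Rightarrow> bool" where
  "weak_2_local_derivation \<Delta> \<longleftrightarrow>
     (\<forall>a b \<phi>. clinear_functional \<phi> \<longrightarrow>
        (\<exists>D. is_derivation D \<and> \<phi> (\<Delta> a) = \<phi> (D a) \<and> \<phi> (\<Delta> b) = \<phi> (D b)))"

definition is_projection :: "complex^'n^'n \<Rightarrow> bool" where
  "is_projection p \<longleftrightarrow> adj p = p \<and> p ** p = p"

text \<open>minimal projection: nonzero projection with no subprojections other than 0 and itself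
  (for projections q, p: q \<le> p iff q p = q)\<close>
definition minimal_projection :: "complex^'n^'n \<Rightarrow> bool" where
  "minimal_projection p \<longleftrightarrow> is_projection p \<and> p \<noteq> 0 \<and>
     (\<forall>q. is_projection q \<and> q ** p = q \<longrightarrow> q = 0 \<or> q = p)"

end

theory Submission imports Defs begin

type_synonym 'n mtx = "complex^('n::finite)^'n"

lemma mm_add_r: "((A::('n::finite) mtx) + B) ** C = A ** C + B ** C"
  by (vector matrix_matrix_mult_def sum.distrib[symmetric] field_simps)
lemma mm_diff_r: "((A::('n::finite) mtx) - B) ** C = A ** C - B ** C"
  by (vector matrix_matrix_mult_def sum_subtractf[symmetric] field_simps)
lemma mm_diff_l: "(A::('n::finite) mtx) ** (B - C) = A ** B - A ** C"
  by (vector matrix_matrix_mult_def sum_subtractf[symmetric] field_simps)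
lemma mm_add_l: "(A::('n::finite) mtx) ** (B + C) = A ** B + A ** C"
  by (rule matrix_add_ldistrib)

lemma cscale_mat: "cscale c (A::('n::finite) mtx) = mat c ** A"
  by (simp add: cscale_def matrix_matrix_mult_def mat_def vec_eq_iff if_distrib if_distribR sum.delta' cong: if_cong)
lemma mat_comm: "(A::('n::finite) mtx) ** mat c = mat c ** A"
  by (simp add: matrix_matrix_mult_def mat_def vec_eq_iff if_distrib if_distribR sum.delta' mult.commute cong: if_cong)

definition tr :: "('n::finite) mtx \<Rightarrow> complex" where "tr A = (\<Sum>i\<in>UNIV. A$i$i)"

lemma tr_add: "tr (A + B) = tr A + tr B" by (simp add: tr_def sum.distrib)
lemma tr_diff: "tr (A - B) = tr A - tr B" by (simp add: tr_def sum_subtractf)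
lemma tr_0[simp]: "tr 0 = 0" by (simp add: tr_def)
lemma tr_cyc: "tr ((A::('n::finite) mtx) ** B) = tr (B ** A)"
  unfolding tr_def matrix_matrix_mult_def
  apply simp
  apply (subst sum.swap)
  apply (simp add: mult.commute)
  done
lemma tr_mat: "tr (mat c ** (A::('n::finite) mtx)) = c * tr A"
  by (simp add: tr_def cscale_mat[symmetric] cscale_def sum_distrib_left)

definition E :: "'n \<Rightarrow> 'n \<Rightarrow> ('n::finite) mtx" where
  "E i j = (\<chi> a b. if a = i \<and> b = j then 1 else 0)"

lemma E_mult: "E i j ** E k l = (if j = k then E i l else 0)"
proof -
  have "\<And>a b. (\<Sum>c\<in>UNIV. (if a = i \<and> c = j then 1 else 0) * (if c = k \<and> b = l then 1 else 0) :: complex)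
     = (\<Sum>c\<in>UNIV. if c = j then (if a = i \<and> j = k \<and> b = l then 1 else 0) else 0)"
    by (rule sum.cong) auto
  then show ?thesis
    by (auto simp: E_def matrix_matrix_mult_def vec_eq_iff)
qed

lemma tr_E: "tr (E j i ** A) = A$i$j"
proof -
  have "\<And>a. (\<Sum>c\<in>UNIV. (if a = j \<and> c = i then 1 else 0) * A$c$a) = (if a = j then A$i$j else 0)"
  proof -
    fix a
    have "(\<Sum>c\<in>UNIV. (if a = j \<and> c = i then 1 else 0) * A$c$a) = (\<Sum>c\<in>UNIV. if c = i then (if a = j then A$i$j else 0) else 0)"
      by (rule sum.cong) auto
    then show "(\<Sum>c\<in>UNIV. (if a = j \<and> c = i then 1 else 0) * A$c$a) = (if a = j then A$i$j else 0)" by simp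
  qed
  then show ?thesis by (simp add: E_def tr_def matrix_matrix_mult_def)
qed

lemma tr_zero_all: "(\<And>z. tr (z ** (A::('n::finite) mtx)) = 0) \<Longrightarrow> A = 0"
  by (metis tr_E vec_eq_iff zero_index)

lemma tr_sandwich: fixes A C Y :: "('n::finite) mtx" assumes h: "\<And>z. tr (A ** z ** C ** Y) = 0" shows "C ** Y ** A = 0"
proof (rule tr_zero_all)
  fix z
  have "tr (z ** (C ** Y ** A)) = tr (A ** (z ** (C ** Y)))"
    by (metis tr_cyc matrix_mul_assoc)
  also have "\<dots> = 0" using h[of z] by (simp add: matrix_mul_assoc)
  finally show "tr (z ** (C ** Y ** A)) = 0" .
qed

lemma mat_decomp: "(A::('n::finite) mtx) = (\<Sum>i\<in>UNIV. \<Sum>j\<in>UNIV. mat (A$i$j) ** E i j)"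
proof -
  have "\<And>a b. (\<Sum>i\<in>UNIV. \<Sum>j\<in>UNIV. A$i$j * (if a = i \<and> b = j then 1 else 0)) = A$a$b"
  proof -
    fix a b
    have "\<And>i. (\<Sum>j\<in>UNIV. A$i$j * (if a = i \<and> b = j then 1 else 0)) = (if i = a then A$a$b else 0)"
    proof -
      fix i
      have "(\<Sum>j\<in>UNIV. A$i$j * (if a = i \<and> b = j then 1 else 0)) = (\<Sum>j\<in>UNIV. if j = b then (if i = a then A$a$b else 0) else 0)"
        by (rule sum.cong) auto
      then show "(\<Sum>j\<in>UNIV. A$i$j * (if a = i \<and> b = j then 1 else 0)) = (if i = a then A$a$b else 0)" by simp
    qed
    then show "(\<Sum>i\<in>UNIV. \<Sum>j\<in>UNIV. A$i$j * (if a = i \<and> b = j then 1 else 0)) = A$a$b" by simp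
  qed
  then show ?thesis
    by (simp add: vec_eq_iff sum_component cscale_mat[symmetric] cscale_def E_def)
qed

context
  fixes D :: "('n::finite) mtx \<Rightarrow> 'n mtx"
  assumes der: "is_derivation D"
begin

lemma der_add: "D (A + B) = D A + D B" using der by (simp add: is_derivation_def)
lemma der_mult: "D (A ** B) = D A ** B + A ** D B" using der by (simp add: is_derivation_def)
lemma der_mat: "D (mat c ** A) = mat c ** D A"
  using der unfolding is_derivation_def cscale_mat by blast
lemma der_0: "D 0 = 0"
proof -
  have "D (0 + 0) = D 0 + D 0" by (rule der_add)
  then show ?thesis by simp
qed
lemma der_diff: "D (A - B) = D A - D B"
proof -
  have "D ((A - B) + B) = D (A - B) + D B" by (rule der_add)
  then show ?thesis by (simp add: algebra_simps)
qed
lemma der_sum: "finite S \<Longrightarrow> D (sum f S) = (\<Sum>x\<in>S. D (f x))"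
  by (induction S rule: finite_induct) (simp_all add: der_0 der_add)

lemma tr_sum: "tr (sum f S) = (\<Sum>x\<in>S. tr (f x))"
  unfolding tr_def by (simp add: sum_component sum.swap[of _ UNIV S])

lemma der_idem: assumes "f ** f = f" shows "tr (D f) = 0"
proof -
  have 1: "D f = D f ** f + f ** D f" using der_mult[of f f] assms by simp
  have "f ** D f ** f = f ** (D f ** f + f ** D f) ** f" using 1 by simp
  also have "\<dots> = f ** D f ** f + f ** D f ** f"
    by (simp add: mm_add_l mm_add_r matrix_mul_assoc assms)
       (metis assms matrix_mul_assoc)
  finally have 2: "f ** D f ** f = 0" by simp
  have "tr (f ** D f) = tr ((f ** f) ** D f)" using assms by simp
  also have "\<dots> = tr (f ** D f ** f)" by (metis tr_cyc matrix_mul_assoc)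
  finally have 3: "tr (f ** D f) = 0" using 2 by simp
  have "tr (D f) = tr (D f ** f) + tr (f ** D f)" using 1 by (metis tr_add)
  then show ?thesis using 3 tr_cyc[of "D f" f] by simp
qed

lemma der_E: "tr (D (E i j)) = 0"
proof (cases "i = j")
  case True
  then show ?thesis by (intro der_idem) (simp add: E_mult)
next
  case False
  have "(E i i + E i j) ** (E i i + E i j) = E i i + E i j"
    using False by (simp add: mm_add_l mm_add_r E_mult)
  then have "tr (D (E i i + E i j)) = 0" by (rule der_idem)
  moreover have "tr (D (E i i)) = 0" by (intro der_idem) (simp add: E_mult)
  ultimately show ?thesis by (simp add: der_add tr_add)
qed

lemma der_tr: "tr (D z) = 0"
proof -
  have "D z = D (\<Sum>i\<in>UNIV. \<Sum>j\<in>UNIV. mat (z$i$j) ** E i j)" by (subst mat_decomp) simp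
  also have "\<dots> = (\<Sum>i\<in>UNIV. \<Sum>j\<in>UNIV. mat (z$i$j) ** D (E i j))"
    by (simp add: der_sum der_mat)
  finally show ?thesis by (simp add: tr_sum tr_mat der_E)
qed

lemma der_sq: "tr (y ** D y) = 0"
proof -
  have "tr (D (y ** y)) = tr (D y ** y) + tr (y ** D y)" by (simp add: der_mult tr_add)
  then have "0 = tr (y ** D y) + tr (y ** D y)" by (simp add: der_tr tr_cyc[of "D y" y])
  then show ?thesis by simp
qed

lemma der_ac: fixes a c y :: "'n mtx" assumes "y ** a = 0" "c ** y = 0" shows "tr (a ** c ** D y) = 0"
proof -
  have "D (c ** y) = 0" using assms der_0 by simp
  then have "c ** D y = - (D c ** y)" using der_mult[of c y] by (simp add: eq_neg_iff_add_eq_0 add.commute)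
  then have "tr (a ** c ** D y) = - tr (a ** (D c ** y))"
  proof -
    have "tr (a ** c ** D y) = tr (a ** (c ** D y))" by (simp add: matrix_mul_assoc)
    also have "\<dots> = tr (a ** (0 - (D c ** y)))" using \<open>c ** D y = - (D c ** y)\<close> by simp
    also have "\<dots> = - tr (a ** (D c ** y))" by (simp only: mm_diff_l tr_diff) simp
    finally show ?thesis .
  qed
  also have "tr (a ** (D c ** y)) = tr (y ** a ** D c)" by (metis tr_cyc matrix_mul_assoc)
  finally show ?thesis using assms by simp
qed

end

lemma adj_adj: "adj (adj A) = A" by (simp add: adj_def vec_eq_iff)
lemma adj_mult: "adj ((A::('n::finite) mtx) ** B) = adj B ** adj A"
  by (simp add: adj_def matrix_matrix_mult_def vec_eq_iff mult.commute)
lemma adj_diff: "adj (A - B) = adj A - adj B" by (simp add: adj_def vec_eq_iff)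

lemma adj_zero: fixes f :: "('n::finite) mtx" assumes "adj f ** f = 0" shows "f = 0"
proof -
  have "\<And>i j. f$i$j = 0"
  proof -
    fix i j
    have "(adj f ** f)$j$j = 0" using assms by simp
    then have "(\<Sum>k\<in>UNIV. cnj (f$k$j) * f$k$j) = 0" by (simp add: adj_def matrix_matrix_mult_def)
    moreover have "\<And>z::complex. cnj z * z = complex_of_real ((cmod z)^2)"
      by (metis complex_norm_square mult.commute)
    ultimately have "(\<Sum>k\<in>UNIV. complex_of_real ((cmod (f$k$j))^2)) = 0"
      by simp
    then have "(\<Sum>k\<in>UNIV. (cmod (f$k$j))^2) = 0"
      by (metis of_real_eq_0_iff of_real_sum)
    then have "\<forall>k\<in>UNIV. (cmod (f$k$j))^2 = 0"
      by (subst sum_nonneg_eq_0_iff[symmetric]) auto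
    then show "f$i$j = 0" by simp
  qed
  then show ?thesis by (simp add: vec_eq_iff)
qed

lemma partial_iso: fixes e :: "('n::finite) mtx"
  assumes "adj e ** e ** (adj e ** e) = adj e ** e" shows "e ** (adj e ** e) = e"
proof -
  define Q where "Q = adj e ** e"
  have QQ: "Q ** Q = Q" using assms Q_def by simp
  have aQ: "adj Q = Q" unfolding Q_def by (simp add: adj_mult adj_adj)
  define f where "f = e - e ** Q"
  have af: "adj f = adj e - Q ** adj e" unfolding f_def by (simp add: adj_diff adj_mult aQ)
  have QQQ: "Q ** Q ** Q = Q" using QQ by simp
  have "adj f ** f = (adj e - Q ** adj e) ** (e - e ** Q)" using af f_def by simp
  also have "\<dots> = adj e ** e - adj e ** e ** Q - Q ** adj e ** e + Q ** adj e ** e ** Q"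
    by (simp add: mm_diff_l mm_diff_r matrix_mul_assoc algebra_simps)
  also have "\<dots> = 0"
  proof -
    have h1: "Q ** adj e ** e = Q" using QQ unfolding Q_def by (simp add: matrix_mul_assoc)
    have h2: "adj e ** e ** Q = Q" using QQ unfolding Q_def by simp
    have h3: "Q ** adj e ** e ** Q = Q" using h1 QQ by simp
    show ?thesis by (simp add: h1 h2 h3 Q_def[symmetric])
  qed
  finally have "f = 0" by (rule adj_zero)
  then show ?thesis unfolding f_def Q_def by simp
qed

lemma key:
  assumes w2: "weak_2_local_derivation \<Delta>" and b0: "\<Delta> b = 0"
    and hD: "\<And>D. is_derivation D \<Longrightarrow> tr (w ** D (x - b)) = 0"
  shows "tr (w ** \<Delta> (x::('n::finite) mtx)) = 0"
proof -
  have cf: "clinear_functional (\<lambda>A. tr (w ** A))"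
    unfolding clinear_functional_def
  proof (intro conjI allI)
    fix A B show "tr (w ** (A + B)) = tr (w ** A) + tr (w ** B)" by (simp add: mm_add_l tr_add)
  next
    fix c A
    have "w ** cscale c A = mat c ** (w ** A)"
      by (simp add: cscale_mat matrix_mul_assoc mat_comm)
    then show "tr (w ** cscale c A) = c * tr (w ** A)" by (simp add: tr_mat)
  qed
  obtain D where D: "is_derivation D" "tr (w ** \<Delta> x) = tr (w ** D x)" "tr (w ** \<Delta> b) = tr (w ** D b)"
    using w2 cf unfolding weak_2_local_derivation_def by blast
  have "tr (w ** D (x - b)) = tr (w ** D x) - tr (w ** D b)"
    using der_diff[OF D(1)] by (simp add: mm_diff_l tr_diff)
  then show ?thesis using hD[OF D(1)] D b0 by simp
qed


theorem lemma2p4: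
  fixes \<Delta> :: "complex^'n^'n \<Rightarrow> complex^'n^'n"
    and p :: "'n \<Rightarrow> complex^'n^'n"
    and m :: 'n
    and R :: "'n set"
    and q r :: "complex^'n^'n"
  assumes "weak_2_local_derivation \<Delta>"
    and "\<And>i. minimal_projection (p i)"
    and "\<And>i j. i \<noteq> j \<Longrightarrow> p i ** p j = 0"
    and "R \<subseteq> UNIV - {m}"
    and "q = mat 1 - p m"
    and "r = (\<Sum>i\<in>R. p i)"
    and "\<And>a. \<Delta> (q ** a ** q + r ** a ** p m) = 0"
  shows "\<forall>a c k e. k \<noteq> m \<and> adj e ** e = p m \<and> e ** adj e = p k \<longrightarrow>
     \<Delta> (q ** a ** q + r ** a ** p m + cscale c e)
       = p k ** \<Delta> (q ** a ** q + r ** a ** p m + cscale c e) ** p m"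
proof (intro allI impI, elim conjE)
  fix a c k e
  assume k: "k \<noteq> m" and e1: "adj e ** e = p m" and e2: "e ** adj e = p k"
  note w2 = assms(1)
  have proj: "\<And>i. p i ** p i = p i" using assms(2) by (simp add: minimal_projection_def is_projection_def)
  have PPm: "p k ** p m = 0" and PmP: "p m ** p k = 0" using assms(3) k by auto
  define P Pm N where "P = p k" and "Pm = p m" and "N = mat 1 - p k"
  have qd: "q = mat 1 - Pm" using assms(5) Pm_def by simp
  have PP: "P ** P = P" and PmPm: "Pm ** Pm = Pm" using proj P_def Pm_def by auto
  have PPm': "P ** Pm = 0" and PmP': "Pm ** P = 0" using PPm PmP P_def Pm_def by auto
  have ePm: "e ** Pm = e" using partial_iso[of e] e1 PmPm Pm_def by simp
  have Pe: "P ** e = e"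
  proof -
    have "P ** e = e ** (adj e ** e)" using e2 P_def by (simp add: matrix_mul_assoc)
    then show ?thesis using e1 ePm Pm_def by simp
  qed
  have eq: "e ** q = 0" by (simp add: qd mm_diff_l ePm)
  have qe: "q ** e = e"
  proof -
    have "Pm ** e = Pm ** P ** e" by (simp add: Pe matrix_mul_assoc[symmetric])
    then have "Pm ** e = 0" using PmP' by simp
    then show ?thesis by (simp add: qd mm_diff_r)
  qed
  have Ne: "N ** e = 0" by (simp add: N_def mm_diff_r Pe[unfolded P_def])
  have qP: "q ** P = P" by (simp add: qd mm_diff_r PmP')
  have Pq: "P ** q = P" by (simp add: qd mm_diff_l PPm')
  have qq: "q ** q = q" by (simp add: qd mm_diff_l mm_diff_r PmPm)
  have qPm: "q ** Pm = 0" by (simp add: qd mm_diff_r PmPm)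
  have ee: "e ** e = 0"
  proof -
    have "e ** e = e ** Pm ** (P ** e)" by (simp add: ePm Pe)
    also have "\<dots> = e ** (Pm ** P) ** e" by (simp add: matrix_mul_assoc)
    finally show ?thesis by (simp add: PmP')
  qed
  have eP: "e ** P = 0"
  proof -
    have "e ** P = e ** (Pm ** P)" by (simp add: ePm matrix_mul_assoc)
    then show ?thesis by (simp add: PmP')
  qed
  define X where "X b = q ** b ** q + r ** b ** Pm" for b
  have H: "\<And>b. \<Delta> (X b) = 0" using assms(7) X_def Pm_def by simp
  have Xdiff: "\<And>b b'. X (b - b') = X b - X b'"
    by (simp add: X_def mm_diff_l mm_diff_r)
  have Xmat: "\<And>b. X (mat c ** b) = mat c ** X b"
    by (simp add: X_def mm_add_l matrix_mul_assoc mat_comm)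
  define x where "x = X a + mat c ** e"
  have xdef: "q ** a ** q + r ** a ** p m + cscale c e = x"
    by (simp add: x_def X_def Pm_def cscale_mat)
  define Y where "Y = \<Delta> x"
  have S1: "\<And>z. tr (q ** z ** N ** Y) = 0"
  proof -
    fix z
    show "tr (q ** z ** N ** Y) = 0" unfolding Y_def
    proof (rule key[OF w2 H[of a]])
      fix D :: "'n mtx \<Rightarrow> 'n mtx" assume D: "is_derivation D"
      have "x - X a = mat c ** e" by (simp add: x_def)
      then have "q ** z ** N ** D (x - X a) = mat c ** (q ** (z ** N) ** D e)"
        by (simp add: der_mat[OF D] matrix_mul_assoc mat_comm)
      moreover have "tr (q ** (z ** N) ** D e) = 0"
        by (rule der_ac[OF D]) (simp_all add: eq matrix_mul_assoc[symmetric] Ne)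
      ultimately show "tr (q ** z ** N ** D (x - X a)) = 0" by (simp add: tr_mat)
    qed
  qed
  have F1: "N ** Y ** q = 0" by (rule tr_sandwich) (rule S1)
  have S2: "\<And>z. tr ((Pm - e) ** z ** N ** Y) = 0"
  proof -
    fix z
    have XP: "X P = P" by (simp add: X_def matrix_mul_assoc[symmetric] Pq qP) (simp add: matrix_mul_assoc[symmetric] PPm')
    show "tr ((Pm - e) ** z ** N ** Y) = 0" unfolding Y_def
    proof (rule key[OF w2 H[of "a - mat c ** P"]])
      fix D :: "'n mtx \<Rightarrow> 'n mtx" assume D: "is_derivation D"
      have "x - X (a - mat c ** P) = mat c ** (e + P)"
        by (simp add: x_def Xdiff Xmat XP mm_add_l)
      then have "(Pm - e) ** z ** N ** D (x - X (a - mat c ** P)) = mat c ** ((Pm - e) ** (z ** N) ** D (e + P))"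
        by (simp add: der_mat[OF D] matrix_mul_assoc mat_comm)
      moreover have "tr ((Pm - e) ** (z ** N) ** D (e + P)) = 0"
      proof (rule der_ac[OF D])
        show "(e + P) ** (Pm - e) = 0"
          by (simp add: mm_add_r mm_diff_l ePm ee PPm' Pe)
        have "N ** (e + P) = 0" by (simp add: N_def mm_diff_r mm_add_l Pe P_def[symmetric] PP)
        then show "z ** N ** (e + P) = 0" by (simp add: matrix_mul_assoc[symmetric])
      qed
      ultimately show "tr ((Pm - e) ** z ** N ** D (x - X (a - mat c ** P))) = 0" by (simp add: tr_mat)
    qed
  qed
  have F2: "N ** Y ** (Pm - e) = 0" by (rule tr_sandwich) (rule S2)
  have T0: "tr (mat c ** e ** Y) = 0" unfolding Y_def
  proof (rule key[OF w2 H[of a]])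
    fix D :: "'n mtx \<Rightarrow> 'n mtx" assume D: "is_derivation D"
    have "x - X a = mat c ** e" by (simp add: x_def)
    then show "tr (mat c ** e ** D (x - X a)) = 0" using der_sq[OF D, of "mat c ** e"] by simp
  qed
  have S3: "\<And>z. tr (q ** z ** q ** Y) = 0"
  proof -
    fix z
    have Xq: "X (q ** z ** q) = q ** z ** q"
    proof -
      have "q ** (q ** z ** q) ** q = q ** z ** q"
        by (simp add: matrix_mul_assoc qq) (simp add: matrix_mul_assoc[symmetric] qq)
      moreover have "r ** (q ** z ** q) ** Pm = 0"
        by (simp add: matrix_mul_assoc[symmetric] qPm)
      ultimately show ?thesis by (simp add: X_def)
    qed
    have xb: "x - X (a - q ** z ** q) = mat c ** e + q ** z ** q"
      by (simp add: x_def Xdiff Xq)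
    have "tr ((mat c ** e + q ** z ** q) ** Y) = 0" unfolding Y_def
    proof (rule key[OF w2 H[of "a - q ** z ** q"]])
      fix D :: "'n mtx \<Rightarrow> 'n mtx" assume D: "is_derivation D"
      show "tr ((mat c ** e + q ** z ** q) ** D (x - X (a - q ** z ** q))) = 0"
        unfolding xb by (rule der_sq[OF D])
    qed
    then show "tr (q ** z ** q ** Y) = 0" using T0 by (simp add: mm_add_r tr_add)
  qed
  have F3: "q ** Y ** q = 0" by (rule tr_sandwich) (rule S3)
  have qPm1: "q + Pm = mat 1" by (simp add: qd)
  have NYe: "N ** Y ** e = 0"
  proof -
    have "N ** Y ** e = N ** Y ** q ** e" by (simp add: qe matrix_mul_assoc[symmetric])
    then show ?thesis using F1 by simp
  qed
  have NYPm: "N ** Y ** Pm = 0"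
  proof -
    have "N ** Y ** Pm = N ** Y ** (Pm - e) + N ** Y ** e" by (simp add: mm_diff_l)
    then show ?thesis using F2 NYe by simp
  qed
  have NY: "N ** Y = 0"
  proof -
    have "N ** Y = N ** Y ** (q + Pm)" by (simp add: qPm1)
    then show ?thesis using F1 NYPm by (simp add: mm_add_l)
  qed
  have YPY: "Y = P ** Y"
  proof -
    have "Y = (P + N) ** Y" by (simp add: N_def P_def)
    then show ?thesis using NY by (simp add: mm_add_r)
  qed
  have PYq: "P ** Y ** q = 0"
  proof -
    have "P ** Y ** q = P ** (q ** Y ** q)" using Pq by (simp add: matrix_mul_assoc)
    then show ?thesis using F3 by simp
  qed
  have "Y = P ** Y ** Pm"
  proof -
    have "P ** Y = P ** Y ** (q + Pm)" by (simp add: qPm1)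
    then show ?thesis using YPY PYq by (simp add: mm_add_l)
  qed
  then show "\<Delta> (q ** a ** q + r ** a ** p m + cscale c e)
       = p k ** \<Delta> (q ** a ** q + r ** a ** p m + cscale c e) ** p m"
    unfolding xdef Y_def P_def Pm_def .
qed
end
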